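(* Let $P$ be a multiprogram in which at most one thread per process calls deliver, and let $\widehat C$ be a finite computation of $\mathrm{TS}(P)$ satisfying $\mathrm{NW}$. Then for all processes $\widehat p,\widehat r$, the writes performed by $\widehat p$ to its variable $T[\widehat r]$, taken in program order, write strictly increasing values.
   Context: $\mathrm{NW}$ (message-passing network model): processes communicate by $\mathrm{send}(s,d,m)$/$\mathrm{recv}(s,d,m)$ of uniquely identified messages; messages from a given sender to a given receiver are received in the order sent (FIFO channels), each message is received at most once and only after being sent; threads within a process share local variables whose accesses are sequentially consistent. Formally $\mathrm{NW}(C)$ holds iff for each process there is a valid total order of its operations extending $\to_{\mathrm{HappensBefore}}$, the transitive closure of program order, send-before-receive, FIFO-channel order (receives of $m,m'$ from $s$ to $d$ ordered as the sends), and writes-into order on local variables; and messages are received iff sent. The timestamp transformation $\mathrm{TS}$. Each process $\widehat p$ has: integer local-counter (initially 0); arrays $\mathrm{counter}[\cdot]$ and $T[\cdot]$ indexed by processes, initially 0; a priority queue $\mathrm{priorityQ}[l]$ for each label $l\in L$ ordered by (timestamp, source) lexicographically; a FIFO queue $\mathrm{fifoQ}[\widehat q]$ for each process $\widehat q$. Queue elements are $[u,ts,c,src]$. $\mathrm{bcast}(u,l)$ ($l\in L\cup\{\bot\}$): send $[\mathrm{LBR},u,l]$ to $\widehat p$ itself. ProcessQueueElement$(qe,l,s)$: enqueue $qe$ into $\mathrm{priorityQ}[l]$ if $l\neq\bot$, else into $\mathrm{fifoQ}[s]$. HandleMessage: receive a message from some $\widehat s$; if $[\mathrm{LBR},u,l]$: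 $T[\widehat p]\gets T[\widehat p]+1$, local-counter $\gets$ local-counter$+1$, $qe\gets[u,T[\widehat p],\text{local-counter},\widehat p]$, ProcessQueueElement$(qe,l,\widehat p)$, send $[\mathrm{ORD},l,qe]$ to every other process; if $[\mathrm{TSUPD},t,\widehat q]$: $T[\widehat q]\gets t$; if $[\mathrm{ORD},l,qe]$: $T[\widehat s]\gets qe.ts$, ProcessQueueElement$(qe,l,\widehat s)$, and if $qe.ts>T[\widehat p]$ then $T[\widehat p]\gets qe.ts$ and send $[\mathrm{TSUPD},T[\widehat p],\widehat p]$ to every other process. CanExtract$(\mathrm{priorityQ}[l])$ holds iff the queue is nonempty and its minimum $qe$ satisfies $qe.c=\mathrm{counter}[qe.src]+1$ and $qe.ts\le T[\widehat q]$ for all $\widehat q$. CanDequeue$(\mathrm{fifoQ}[\widehat q])$ holds iff nonempty and its head $qe$ satisfies $qe.c=\mathrm{counter}[qe.src]+1$. deliver: while no priority queue satisfies CanExtract and no FIFO queue satisfies CanDequeue, call HandleMessage; then remove an element $qe$ from such a queue (extractmin, or FIFO dequeue), set $\mathrm{counter}[qe.src]\gets qe.c$, and return $qe.u$ with its label ($\bot$ for FIFO). Reads/writes of the original program are mapped to themselves. The only writes to $T[\cdot]$ are those listed above. *)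

theory Defs
  imports Main
begin

text \<open>Operational model of the timestamp transformation TS(P) running over an NW
  (FIFO message-passing) network.  Processes are elements of a finite linearly
  ordered type 'p (the order is used for the (timestamp, source) tie-break);
  labels L are the type 'l and L \<union> {bot} is 'l option (None = bot).\<close>

record ('u,'p) qelem =
  qu   :: 'u
  qts  :: int
  qc   :: int
  qsrc :: 'p

datatype ('u,'l,'p) msg =
    LBR 'u "'l option"
  | TSUPD int 'p
  | ORD "'l option" "('u,'p) qelem"

record ('u,'l,'p) pstate =
  localc    :: int
  counter   :: "'p \<Rightarrow> int"
  Tv        :: "'p \<Rightarrow> int"
  priorityQ :: "'l \<Rightarrow> ('u,'p) qelem list"
  fifoQ     :: "'p \<Rightarrow> ('u,'p) qelem list"

text \<open>chan s d is the FIFO channel from s to d (messages sent but not yet received).\<close>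
record ('u,'l,'p) config =
  pst  :: "'p \<Rightarrow> ('u,'l,'p) pstate"
  chan :: "'p \<Rightarrow> 'p \<Rightarrow> ('u,'l,'p) msg list"

definition init_pstate :: "('u,'l,'p) pstate" where
  "init_pstate = \<lparr>localc = 0, counter = (\<lambda>_. 0), Tv = (\<lambda>_. 0),
                  priorityQ = (\<lambda>_. []), fifoQ = (\<lambda>_. [])\<rparr>"

definition init_config :: "('u,'l,'p) config" where
  "init_config = \<lparr>pst = (\<lambda>_. init_pstate), chan = (\<lambda>_ _. [])\<rparr>"

definition process_qe ::
  "('u,'p) qelem \<Rightarrow> 'l option \<Rightarrow> 'p \<Rightarrow> ('u,'l,'p) pstate \<Rightarrow> ('u,'l,'p) pstate" where
  "process_qe qe l s st =
     (case l of
        Some l' \<Rightarrow> st\<lparr>priorityQ := (priorityQ st)(l' := priorityQ st l' @ [qe])\<rparr>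
      | None \<Rightarrow> st\<lparr>fifoQ := (fifoQ st)(s := fifoQ st s @ [qe])\<rparr>)"

definition key_le :: "('u,'p::linorder) qelem \<Rightarrow> ('u,'p) qelem \<Rightarrow> bool" where
  "key_le a b \<longleftrightarrow> qts a < qts b \<or> (qts a = qts b \<and> qsrc a \<le> qsrc b)"

definition is_min :: "('u,'p::linorder) qelem list \<Rightarrow> ('u,'p) qelem \<Rightarrow> bool" where
  "is_min q qe \<longleftrightarrow> qe \<in> set q \<and> (\<forall>x\<in>set q. key_le qe x)"

definition extractable :: "('u,'l,'p) pstate \<Rightarrow> ('u,'p) qelem \<Rightarrow> bool" where
  "extractable st qe \<longleftrightarrow> qc qe = counter st (qsrc qe) + 1 \<and> (\<forall>q. qts qe \<le> Tv st q)"

definition CanExtract :: "('u,'l,'p::linorder) pstate \<Rightarrow> 'l \<Rightarrow> bool" where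
  "CanExtract st l \<longleftrightarrow> (\<exists>qe. is_min (priorityQ st l) qe \<and> extractable st qe)"

definition CanDequeue :: "('u,'l,'p) pstate \<Rightarrow> 'p \<Rightarrow> bool" where
  "CanDequeue st q \<longleftrightarrow> fifoQ st q \<noteq> [] \<and>
     qc (hd (fifoQ st q)) = counter st (qsrc (hd (fifoQ st q))) + 1"

definition blocked :: "('u,'l,'p::linorder) pstate \<Rightarrow> bool" where
  "blocked st \<longleftrightarrow> (\<forall>l. \<not> CanExtract st l) \<and> (\<forall>q. \<not> CanDequeue st q)"

definition send_others ::
  "'p \<Rightarrow> ('u,'l,'p) msg \<Rightarrow> ('p \<Rightarrow> 'p \<Rightarrow> ('u,'l,'p) msg list) \<Rightarrow> ('p \<Rightarrow> 'p \<Rightarrow> ('u,'l,'p) msg list)" where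
  "send_others p m ch = (\<lambda>s d. if s = p \<and> d \<noteq> p then ch s d @ [m] else ch s d)"

definition recv_head ::
  "'p \<Rightarrow> 'p \<Rightarrow> ('p \<Rightarrow> 'p \<Rightarrow> ('u,'l,'p) msg list) \<Rightarrow> ('p \<Rightarrow> 'p \<Rightarrow> ('u,'l,'p) msg list)" where
  "recv_head s d ch = ch(s := (ch s)(d := tl (ch s d)))"

text \<open>One step of the system.  The event list records the writes to the arrays T
  performed in that step, as triples (writer process p, index r, value written),
  in program order.\<close>
inductive step ::
  "('u,'l,'p::{finite,linorder}) config \<Rightarrow> ('p \<times> 'p \<times> int) list \<Rightarrow> ('u,'l,'p) config \<Rightarrow> bool"
where
  bcast:
    "step c [] (c\<lparr>chan := (chan c)(p := (chan c p)(p := chan c p p @ [LBR u l]))\<rparr>)"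
| handle_lbr:
    "\<lbrakk> blocked (pst c p); chan c s p = LBR u l # rest; st = pst c p;
       t' = Tv st p + 1; lc' = localc st + 1;
       qe = \<lparr>qu = u, qts = t', qc = lc', qsrc = p\<rparr>;
       st' = process_qe qe l p (st\<lparr>Tv := (Tv st)(p := t'), localc := lc'\<rparr>) \<rbrakk>
     \<Longrightarrow> step c [(p, p, t')]
           \<lparr>pst = (pst c)(p := st'), chan = send_others p (ORD l qe) (recv_head s p (chan c))\<rparr>"
| handle_tsupd:
    "\<lbrakk> blocked (pst c p); chan c s p = TSUPD t q # rest; st = pst c p \<rbrakk>
     \<Longrightarrow> step c [(p, q, t)]
           \<lparr>pst = (pst c)(p := st\<lparr>Tv := (Tv st)(q := t)\<rparr>), chan = recv_head s p (chan c)\<rparr>"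
| handle_ord_upd:
    "\<lbrakk> blocked (pst c p); chan c s p = ORD l qe # rest; st = pst c p;
       st1 = process_qe qe l s (st\<lparr>Tv := (Tv st)(s := qts qe)\<rparr>);
       qts qe > Tv st1 p \<rbrakk>
     \<Longrightarrow> step c [(p, s, qts qe), (p, p, qts qe)]
           \<lparr>pst = (pst c)(p := st1\<lparr>Tv := (Tv st1)(p := qts qe)\<rparr>),
            chan = send_others p (TSUPD (qts qe) p) (recv_head s p (chan c))\<rparr>"
| handle_ord_noupd:
    "\<lbrakk> blocked (pst c p); chan c s p = ORD l qe # rest; st = pst c p;
       st1 = process_qe qe l s (st\<lparr>Tv := (Tv st)(s := qts qe)\<rparr>);
       \<not> qts qe > Tv st1 p \<rbrakk>
     \<Longrightarrow> step c [(p, s, qts qe)]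
           \<lparr>pst = (pst c)(p := st1), chan = recv_head s p (chan c)\<rparr>"
| extract_pq:
    "\<lbrakk> st = pst c p; is_min (priorityQ st l) qe; extractable st qe \<rbrakk>
     \<Longrightarrow> step c []
           (c\<lparr>pst := (pst c)(p := st\<lparr>priorityQ := (priorityQ st)(l := remove1 qe (priorityQ st l)),
                                      counter := (counter st)(qsrc qe := qc qe)\<rparr>)\<rparr>)"
| dequeue_fq:
    "\<lbrakk> st = pst c p; fifoQ st q = qe # rest; qc qe = counter st (qsrc qe) + 1 \<rbrakk>
     \<Longrightarrow> step c []
           (c\<lparr>pst := (pst c)(p := st\<lparr>fifoQ := (fifoQ st)(q := rest),
                                      counter := (counter st)(qsrc qe := qc qe)\<rparr>)\<rparr>)"

inductive run :: "('u,'l,'p::{finite,linorder}) config \<Rightarrow> ('p \<times> 'p \<times> int) list \<Rightarrow> bool" where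
  run_init: "run init_config []"
| run_step: "\<lbrakk> run c w; step c e c' \<rbrakk> \<Longrightarrow> run c' (w @ e)"

end

theory Submission
  imports Defs
begin

definition mts :: "('u,'l,'p) msg \<Rightarrow> int" where
  "mts m = (case m of LBR _ _ \<Rightarrow> 0 | TSUPD t _ \<Rightarrow> t | ORD _ qe \<Rightarrow> qts qe)"

definition isLBR :: "('u,'l,'p) msg \<Rightarrow> bool" where
  "isLBR m = (case m of LBR _ _ \<Rightarrow> True | _ \<Rightarrow> False)"

definition Inv :: "('u,'l,'p) config \<Rightarrow> bool" where
  "Inv c \<longleftrightarrow>
   (\<forall>p m. m \<in> set (chan c p p) \<longrightarrow> isLBR m) \<and>
   (\<forall>s p m. s \<noteq> p \<longrightarrow> m \<in> set (chan c s p) \<longrightarrow> \<not> isLBR m \<and> (\<forall>t q. m = TSUPD t q \<longrightarrow> q = s)) \<and>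
   (\<forall>s p. s \<noteq> p \<longrightarrow> sorted_wrt (<) (Tv (pst c p) s # map mts (chan c s p))
        \<and> (\<forall>m\<in>set (chan c s p). mts m \<le> Tv (pst c s) s) \<and> Tv (pst c p) s \<le> Tv (pst c s) s)"

lemma Tv_process_qe[simp]: "Tv (process_qe qe l s st) = Tv st"
  by (cases l) (simp_all add: process_qe_def)

lemma Inv_init: "Inv init_config"
  by (simp add: Inv_def init_config_def init_pstate_def)

definition good where
  "good c e c' \<longleftrightarrow> Inv c' \<and> (\<forall>q r'. Tv (pst c q) r' \<le> Tv (pst c' q) r') \<and>
     (\<forall>q r'. sorted_wrt (<) [v. (q0, r0, v) \<leftarrow> e, q0 = q \<and> r0 = r'] \<and>
        (\<forall>v\<in>set [v. (q0, r0, v) \<leftarrow> e, q0 = q \<and> r0 = r']. Tv (pst c q) r' < v \<and> v \<le> Tv (pst c' q) r'))"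



lemma good_nochange:
  fixes c c' :: "('u,'l,'p) config"
  assumes I: "Inv c" and P: "\<And>q. Tv (pst c' q) = Tv (pst c q)" and
    C: "\<And>s d. s \<noteq> d \<Longrightarrow> chan c' s d = chan c s d"
    and D: "\<And>p m. m \<in> set (chan c' p p) \<Longrightarrow> isLBR m"
  shows "good c [] c'"
proof -
  have A: "\<forall>s p m. s \<noteq> p \<longrightarrow> m \<in> set (chan c' s p) \<longrightarrow> \<not> isLBR m \<and> (\<forall>t q. m = TSUPD t q \<longrightarrow> q = s)"
  proof (intro allI impI)
    fix s p :: 'p and m assume "s \<noteq> p" "m \<in> set (chan c' s p)"
    then show "\<not> isLBR m \<and> (\<forall>t q. m = TSUPD t q \<longrightarrow> q = s)"
      using I C unfolding Inv_def by metis
  qed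
  have B: "\<forall>s p. s \<noteq> p \<longrightarrow> sorted_wrt (<) (Tv (pst c' p) s # map mts (chan c' s p))
        \<and> (\<forall>m\<in>set (chan c' s p). mts m \<le> Tv (pst c' s) s) \<and> Tv (pst c' p) s \<le> Tv (pst c' s) s"
  proof (intro allI impI)
    fix s p :: 'p assume sp: "s \<noteq> p"
    show "sorted_wrt (<) (Tv (pst c' p) s # map mts (chan c' s p))
        \<and> (\<forall>m\<in>set (chan c' s p). mts m \<le> Tv (pst c' s) s) \<and> Tv (pst c' p) s \<le> Tv (pst c' s) s"
      using I sp unfolding Inv_def C[OF sp] P by blast
  qed
  have "Inv c'" unfolding Inv_def using A B D by blast
  then show ?thesis unfolding good_def P by simp
qed



lemma chan_so_rh: "send_others p m (recv_head s d ch) x y =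
   (if x = p \<and> y \<noteq> p then (if x = s \<and> y = d then tl (ch s d) else ch x y) @ [m]
    else (if x = s \<and> y = d then tl (ch s d) else ch x y))"
  by (simp add: send_others_def recv_head_def)

lemma chan_rh: "recv_head s d ch x y = (if x = s \<and> y = d then tl (ch s d) else ch x y)"
  by (simp add: recv_head_def)

lemma in_set_tlD: "x \<in> set (tl xs) \<Longrightarrow> x \<in> set xs"
  by (cases xs) auto

lemma sorted_snoc_lt: "sorted_wrt (<) (a # xs) \<Longrightarrow> (\<forall>x\<in>set (a#xs). x < b) \<Longrightarrow> sorted_wrt (<) (a # xs @ [b])"
  by (simp add: sorted_wrt_append)

lemma case_lbr:
  fixes c :: "('u,'l,'p::{finite,linorder}) config"
  assumes I: "Inv c" and h: "chan c s p = LBR u l # rest" and st: "st = pst c p"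
    and t': "t' = Tv st p + 1" and qe: "qe = \<lparr>qu = u, qts = t', qc = lc', qsrc = p\<rparr>"
    and st': "st' = process_qe qe l p (st\<lparr>Tv := (Tv st)(p := t'), localc := lc'\<rparr>)"
    and c': "c' = \<lparr>pst = (pst c)(p := st'), chan = send_others p (ORD l qe) (recv_head s p (chan c))\<rparr>"
  shows "good c [(p, p, t')] c'"
proof -
  have I1: "\<And>x m. m \<in> set (chan c x x) \<Longrightarrow> isLBR m" using I unfolding Inv_def by blast
  have I2: "\<And>x y m. x \<noteq> y \<Longrightarrow> m \<in> set (chan c x y) \<Longrightarrow> \<not> isLBR m \<and> (\<forall>t q. m = TSUPD t q \<longrightarrow> q = x)"
    using I unfolding Inv_def by blast
  have I3: "\<And>x y. x \<noteq> y \<Longrightarrow> sorted_wrt (<) (Tv (pst c y) x # map mts (chan c x y))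
        \<and> (\<forall>m\<in>set (chan c x y). mts m \<le> Tv (pst c x) x) \<and> Tv (pst c y) x \<le> Tv (pst c x) x"
    using I unfolding Inv_def by blast
  have sp: "s = p"
  proof (rule ccontr)
    assume "s \<noteq> p" then show False using I2[of s p "LBR u l"] h by (simp add: isLBR_def)
  qed
  have TV: "\<And>q. Tv (pst c' q) = (if q = p then (Tv (pst c p))(p := t') else Tv (pst c q))"
    using c' st' st by simp
  have CH: "\<And>x y. chan c' x y = (if x = p \<and> y \<noteq> p then chan c x y @ [ORD l qe]
                 else if x = p \<and> y = p then tl (chan c p p) else chan c x y)"
    using c' sp by (auto simp: chan_so_rh)
  have lt: "Tv (pst c p) p < t'" using t' st by simp
  have A: "\<forall>x m. m \<in> set (chan c' x x) \<longrightarrow> isLBR m"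
  proof (intro allI impI)
    fix x m assume "m \<in> set (chan c' x x)"
    then have "m \<in> set (chan c x x)" 
    proof (cases "x = p")
      case True then show ?thesis using \<open>m \<in> set (chan c' x x)\<close> CH[of x x] in_set_tlD by metis
    next
      case False then show ?thesis using \<open>m \<in> set (chan c' x x)\<close> CH[of x x] by simp
    qed
    then show "isLBR m" by (rule I1)
  qed
  have B: "\<forall>x y m. x \<noteq> y \<longrightarrow> m \<in> set (chan c' x y) \<longrightarrow> \<not> isLBR m \<and> (\<forall>t q. m = TSUPD t q \<longrightarrow> q = x)"
  proof (intro allI impI)
    fix x y m assume xy: "x \<noteq> y" and m: "m \<in> set (chan c' x y)"
    show "\<not> isLBR m \<and> (\<forall>t q. m = TSUPD t q \<longrightarrow> q = x)"
    proof (cases "m \<in> set (chan c x y)")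
      case True then show ?thesis using I2[OF xy] by blast
    next
      case False
      then have "m = ORD l qe" using m xy CH[of x y] by (auto split: if_splits)
      then show ?thesis by (simp add: isLBR_def)
    qed
  qed
  have C: "\<forall>x y. x \<noteq> y \<longrightarrow> sorted_wrt (<) (Tv (pst c' y) x # map mts (chan c' x y))
        \<and> (\<forall>m\<in>set (chan c' x y). mts m \<le> Tv (pst c' x) x) \<and> Tv (pst c' y) x \<le> Tv (pst c' x) x"
  proof (intro allI impI)
    fix x y :: 'p assume xy: "x \<noteq> y"
    show "sorted_wrt (<) (Tv (pst c' y) x # map mts (chan c' x y))
        \<and> (\<forall>m\<in>set (chan c' x y). mts m \<le> Tv (pst c' x) x) \<and> Tv (pst c' y) x \<le> Tv (pst c' x) x"
    proof (cases "x = p")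
      case True
      have s1: "sorted_wrt (<) (Tv (pst c y) p # map mts (chan c p y))"
        and b1: "\<forall>m\<in>set (chan c p y). mts m \<le> Tv (pst c p) p"
        and b2: "Tv (pst c y) p \<le> Tv (pst c p) p" using I3[of p y] xy True by auto
      have "sorted_wrt (<) (Tv (pst c y) p # map mts (chan c p y) @ [t'])"
      proof (rule sorted_snoc_lt[OF s1])
        show "\<forall>x\<in>set (Tv (pst c y) p # map mts (chan c p y)). x < t'" using b1 b2 lt by force
      qed
      moreover have "mts (ORD l qe) = t'" using qe by (simp add: mts_def)
      ultimately show ?thesis using True xy b1 b2 lt
        by (auto simp: CH TV)
    next
      case False
      then show ?thesis using I3[OF xy] xy by (auto simp: CH TV)
    qed
  qed
  have "Inv c'" unfolding Inv_def using A B C by blast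
  moreover have "\<forall>q r'. Tv (pst c q) r' \<le> Tv (pst c' q) r'" using lt by (auto simp: TV)
  moreover have "\<forall>q r'. sorted_wrt (<) [v. (q0, r0, v) \<leftarrow> [(p, p, t')], q0 = q \<and> r0 = r'] \<and>
        (\<forall>v\<in>set [v. (q0, r0, v) \<leftarrow> [(p, p, t')], q0 = q \<and> r0 = r']. Tv (pst c q) r' < v \<and> v \<le> Tv (pst c' q) r')"
    using lt by (auto simp: TV)
  ultimately show ?thesis unfolding good_def by blast
qed



lemma case_recv:
  fixes c :: "('u,'l,'p) config"
  assumes I: "Inv c" and h: "chan c s p = m0 # rest" and nl: "\<not> isLBR m0"
    and TV: "\<And>q. Tv (pst c' q) = (if q = p then (Tv (pst c p))(s := mts m0) else Tv (pst c q))"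
    and CH: "\<And>x y. chan c' x y = (if x = s \<and> y = p then rest else chan c x y)"
  shows "good c [(p, s, mts m0)] c' \<and> s \<noteq> p"
proof -
  have I1: "\<And>x m. m \<in> set (chan c x x) \<Longrightarrow> isLBR m" using I unfolding Inv_def by blast
  have I2: "\<And>x y m. x \<noteq> y \<Longrightarrow> m \<in> set (chan c x y) \<Longrightarrow> \<not> isLBR m \<and> (\<forall>t q. m = TSUPD t q \<longrightarrow> q = x)"
    using I unfolding Inv_def by blast
  have I3: "\<And>x y. x \<noteq> y \<Longrightarrow> sorted_wrt (<) (Tv (pst c y) x # map mts (chan c x y))
        \<and> (\<forall>m\<in>set (chan c x y). mts m \<le> Tv (pst c x) x) \<and> Tv (pst c y) x \<le> Tv (pst c x) x"
    using I unfolding Inv_def by blast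
  have sp: "s \<noteq> p"
  proof
    assume "s = p" then show False using I1[of m0 p] h nl by simp
  qed
  have lt: "Tv (pst c p) s < mts m0" and srt: "sorted_wrt (<) (mts m0 # map mts rest)"
    and bnd: "\<forall>m\<in>set (m0 # rest). mts m \<le> Tv (pst c s) s"
    using I3[OF sp] h by auto
  have TVxx: "\<And>x. Tv (pst c' x) x = Tv (pst c x) x" using TV sp by simp
  have A: "\<forall>x m. m \<in> set (chan c' x x) \<longrightarrow> isLBR m"
    using I1 sp by (simp add: CH)
  have B: "\<forall>x y m. x \<noteq> y \<longrightarrow> m \<in> set (chan c' x y) \<longrightarrow> \<not> isLBR m \<and> (\<forall>t q. m = TSUPD t q \<longrightarrow> q = x)"
  proof (intro allI impI)
    fix x y m assume xy: "x \<noteq> y" and m: "m \<in> set (chan c' x y)"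
    then have "m \<in> set (chan c x y)" using h CH[of x y] by (auto split: if_splits)
    then show "\<not> isLBR m \<and> (\<forall>t q. m = TSUPD t q \<longrightarrow> q = x)" using I2[OF xy] by blast
  qed
  have C: "\<forall>x y. x \<noteq> y \<longrightarrow> sorted_wrt (<) (Tv (pst c' y) x # map mts (chan c' x y))
        \<and> (\<forall>m\<in>set (chan c' x y). mts m \<le> Tv (pst c' x) x) \<and> Tv (pst c' y) x \<le> Tv (pst c' x) x"
  proof (intro allI impI)
    fix x y :: 'p assume xy: "x \<noteq> y"
    show "sorted_wrt (<) (Tv (pst c' y) x # map mts (chan c' x y))
        \<and> (\<forall>m\<in>set (chan c' x y). mts m \<le> Tv (pst c' x) x) \<and> Tv (pst c' y) x \<le> Tv (pst c' x) x"
    proof (cases "x = s \<and> y = p")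
      case True
      then show ?thesis using srt bnd TVxx[of s] TV[of p] CH[of s p] by simp
    next
      case False
      have "chan c' x y = chan c x y" using CH[of x y] False by simp
      moreover have "Tv (pst c' y) x = Tv (pst c y) x" using TV[of y] False by auto
      ultimately show ?thesis using I3[OF xy] TVxx[of x] by simp
    qed
  qed
  have "Inv c'" unfolding Inv_def using A B C by blast
  moreover have "\<forall>q r'. Tv (pst c q) r' \<le> Tv (pst c' q) r'" using lt by (auto simp: TV)
  moreover have "\<forall>q r'. sorted_wrt (<) [v. (q0, r0, v) \<leftarrow> [(p, s, mts m0)], q0 = q \<and> r0 = r'] \<and>
        (\<forall>v\<in>set [v. (q0, r0, v) \<leftarrow> [(p, s, mts m0)], q0 = q \<and> r0 = r']. Tv (pst c q) r' < v \<and> v \<le> Tv (pst c' q) r')"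
    using lt by (auto simp: TV)
  ultimately show ?thesis unfolding good_def using sp by blast
qed

lemma case_recv_upd:
  fixes c :: "('u,'l,'p) config"
  assumes I: "Inv c" and h: "chan c s p = m0 # rest" and nl: "\<not> isLBR m0"
    and up: "Tv (pst c p) p < mts m0"
    and TV: "\<And>q. Tv (pst c' q) = (if q = p then (Tv (pst c p))(s := mts m0, p := mts m0) else Tv (pst c q))"
    and CH: "\<And>x y. chan c' x y = (if x = s \<and> y = p then rest else if x = p \<and> y \<noteq> p then chan c x y @ [TSUPD (mts m0) p] else chan c x y)"
  shows "good c [(p, s, mts m0), (p, p, mts m0)] c'"
proof -
  have I1: "\<And>x m. m \<in> set (chan c x x) \<Longrightarrow> isLBR m" using I unfolding Inv_def by blast
  have I2: "\<And>x y m. x \<noteq> y \<Longrightarrow> m \<in> set (chan c x y) \<Longrightarrow> \<not> isLBR m \<and> (\<forall>t q. m = TSUPD t q \<longrightarrow> q = x)"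
    using I unfolding Inv_def by blast
  have I3: "\<And>x y. x \<noteq> y \<Longrightarrow> sorted_wrt (<) (Tv (pst c y) x # map mts (chan c x y))
        \<and> (\<forall>m\<in>set (chan c x y). mts m \<le> Tv (pst c x) x) \<and> Tv (pst c y) x \<le> Tv (pst c x) x"
    using I unfolding Inv_def by blast
  have sp: "s \<noteq> p"
  proof
    assume "s = p" then show False using I1[of m0 p] h nl by simp
  qed
  have lt: "Tv (pst c p) s < mts m0" and srt: "sorted_wrt (<) (mts m0 # map mts rest)"
    and bnd: "\<forall>m\<in>set (m0 # rest). mts m \<le> Tv (pst c s) s"
    using I3[OF sp] h by auto
  have TVxx: "\<And>x. x \<noteq> p \<Longrightarrow> Tv (pst c' x) x = Tv (pst c x) x" using TV by simp
  have TVpp: "Tv (pst c' p) p = mts m0" using TV by simp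
  have A: "\<forall>x m. m \<in> set (chan c' x x) \<longrightarrow> isLBR m"
    using I1 sp by (simp add: CH)
  have B: "\<forall>x y m. x \<noteq> y \<longrightarrow> m \<in> set (chan c' x y) \<longrightarrow> \<not> isLBR m \<and> (\<forall>t q. m = TSUPD t q \<longrightarrow> q = x)"
  proof (intro allI impI)
    fix x y m assume xy: "x \<noteq> y" and m: "m \<in> set (chan c' x y)"
    show "\<not> isLBR m \<and> (\<forall>t q. m = TSUPD t q \<longrightarrow> q = x)"
    proof (cases "m \<in> set (chan c x y)")
      case True then show ?thesis using I2[OF xy] by blast
    next
      case False
      then have "m = TSUPD (mts m0) p \<and> x = p" using m h xy CH[of x y] by (auto split: if_splits)
      then show ?thesis by (simp add: isLBR_def)
    qed
  qed
  have C: "\<forall>x y. x \<noteq> y \<longrightarrow> sorted_wrt (<) (Tv (pst c' y) x # map mts (chan c' x y))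
        \<and> (\<forall>m\<in>set (chan c' x y). mts m \<le> Tv (pst c' x) x) \<and> Tv (pst c' y) x \<le> Tv (pst c' x) x"
  proof (intro allI impI)
    fix x y :: 'p assume xy: "x \<noteq> y"
    show "sorted_wrt (<) (Tv (pst c' y) x # map mts (chan c' x y))
        \<and> (\<forall>m\<in>set (chan c' x y). mts m \<le> Tv (pst c' x) x) \<and> Tv (pst c' y) x \<le> Tv (pst c' x) x"
    proof (cases "x = s \<and> y = p")
      case True
      then show ?thesis using srt bnd TVxx[of s] TV[of p] CH[of s p] sp by simp
    next
      case False
      note F = False
      show ?thesis
      proof (cases "x = p")
        case True
        have s1: "sorted_wrt (<) (Tv (pst c y) p # map mts (chan c p y))"
          and b1: "\<forall>m\<in>set (chan c p y). mts m \<le> Tv (pst c p) p"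
          and b2: "Tv (pst c y) p \<le> Tv (pst c p) p" using I3[of p y] xy True by auto
        have s2: "sorted_wrt (<) (Tv (pst c y) p # map mts (chan c p y) @ [mts m0])"
        proof (rule sorted_snoc_lt[OF s1])
          show "\<forall>x\<in>set (Tv (pst c y) p # map mts (chan c p y)). x < mts m0" using b1 b2 up by force
        qed
        have e1: "Tv (pst c' y) p = Tv (pst c y) p" using TV[of y] xy True by simp
        have e2: "chan c' p y = chan c p y @ [TSUPD (mts m0) p]" using CH[of p y] xy True sp by simp
        show ?thesis using s2 b1 b2 up e1 e2 TVpp True by (auto simp: mts_def)
      next
        case False
        have "chan c' x y = chan c x y" using CH[of x y] F False by simp
        moreover have "Tv (pst c' y) x = Tv (pst c y) x" using TV[of y] F False xy by auto
        ultimately show ?thesis using I3[OF xy] False TVxx[of x] by simp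
      qed
    qed
  qed
  have "Inv c'" unfolding Inv_def using A B C by blast
  moreover have "\<forall>q r'. Tv (pst c q) r' \<le> Tv (pst c' q) r'" using lt up by (auto simp: TV)
  moreover have "\<forall>q r'. sorted_wrt (<) [v. (q0, r0, v) \<leftarrow> [(p, s, mts m0), (p, p, mts m0)], q0 = q \<and> r0 = r'] \<and>
        (\<forall>v\<in>set [v. (q0, r0, v) \<leftarrow> [(p, s, mts m0), (p, p, mts m0)], q0 = q \<and> r0 = r']. Tv (pst c q) r' < v \<and> v \<le> Tv (pst c' q) r')"
    using lt up sp by (auto simp: TV)
  ultimately show ?thesis unfolding good_def by blast
qed



lemma step_good:
  fixes c :: "('u,'l,'p::{finite,linorder}) config"
  assumes I: "Inv c" and S: "step c e c'"
  shows "good c e c'"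
  using S
proof cases
  case (bcast p u l)
  have "good c [] c'"
  proof (rule good_nochange[OF I])
    show "\<And>q. Tv (pst c' q) = Tv (pst c q)" using bcast by simp
    show "\<And>s d. s \<noteq> d \<Longrightarrow> chan c' s d = chan c s d" using bcast by auto
    fix x m assume m: "m \<in> set (chan c' x x)"
    show "isLBR m"
    proof (cases "x = p")
      case True
      then have "m \<in> set (chan c x x) \<or> m = LBR u l" using m bcast by auto
      then show ?thesis using I unfolding Inv_def by (auto simp: isLBR_def)
    next
      case False
      then have "m \<in> set (chan c x x)" using m bcast by simp
      then show ?thesis using I unfolding Inv_def by blast
    qed
  qed
  then show ?thesis using bcast by simp
next
  case (handle_lbr p s u l rest st t' lc' qe st')
  show ?thesis using case_lbr[OF I handle_lbr(4,5,6,8,9,2)] handle_lbr(1) by simp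
next
  case (handle_tsupd p s t q rest st)
  have I1: "\<And>x m. m \<in> set (chan c x x) \<Longrightarrow> isLBR m" using I unfolding Inv_def by blast
  have sp: "s \<noteq> p" using I1[of "TSUPD t q" p] handle_tsupd by (auto simp: isLBR_def)
  have qs: "q = s" using I sp handle_tsupd unfolding Inv_def by force
  have G: "good c [(p, s, mts (TSUPD t q :: ('u,'l,'p) msg))] c' \<and> s \<noteq> p"
  proof (rule case_recv[OF I handle_tsupd(4)])
    show "\<not> isLBR (TSUPD t q :: ('u,'l,'p) msg)" by (simp add: isLBR_def)
    show "\<And>q'. Tv (pst c' q') = (if q' = p then (Tv (pst c p))(s := mts (TSUPD t q :: ('u,'l,'p) msg)) else Tv (pst c q'))"
      using handle_tsupd qs by (simp add: mts_def)
    show "\<And>x y. chan c' x y = (if x = s \<and> y = p then rest else chan c x y)"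
      using handle_tsupd by (simp add: chan_rh)
  qed
  then show ?thesis using handle_tsupd qs by (simp add: mts_def)
next
  case (handle_ord_upd p s l qe rest st st1)
  have I1: "\<And>x m. m \<in> set (chan c x x) \<Longrightarrow> isLBR m" using I unfolding Inv_def by blast
  have sp: "s \<noteq> p" using I1[of "ORD l qe" p] handle_ord_upd by (auto simp: isLBR_def)
  have G: "good c [(p, s, mts (ORD l qe :: ('u,'l,'p) msg)), (p, p, mts (ORD l qe :: ('u,'l,'p) msg))] c'"
    by (rule case_recv_upd[OF I handle_ord_upd(4)])
       (use handle_ord_upd sp in \<open>auto simp: isLBR_def mts_def chan_so_rh\<close>)
  then show ?thesis using handle_ord_upd by (simp add: mts_def)
next
  case (handle_ord_noupd p s l qe rest st st1)
  have G: "good c [(p, s, mts (ORD l qe :: ('u,'l,'p) msg))] c' \<and> s \<noteq> p"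
    by (rule case_recv[OF I handle_ord_noupd(4)])
       (use handle_ord_noupd in \<open>auto simp: isLBR_def mts_def chan_rh\<close>)
  then show ?thesis using handle_ord_noupd by (simp add: mts_def)
next
  case (extract_pq st p l qe)
  have "good c [] c'"
    by (rule good_nochange[OF I]) (use extract_pq I in \<open>auto simp: Inv_def\<close>)
  then show ?thesis using extract_pq by simp
next
  case (dequeue_fq st p q qe rest)
  have "good c [] c'"
    by (rule good_nochange[OF I]) (use dequeue_fq I in \<open>auto simp: Inv_def\<close>)
  then show ?thesis using dequeue_fq by simp
qed


lemma run_good:
  assumes "run c w"
  shows "Inv c \<and> (\<forall>q r. sorted_wrt (<) [v. (q0, r0, v) \<leftarrow> w, q0 = q \<and> r0 = r] \<and>
     (\<forall>v\<in>set [v. (q0, r0, v) \<leftarrow> w, q0 = q \<and> r0 = r]. v \<le> Tv (pst c q) r))"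
  using assms
proof induction
  case run_init
  then show ?case using Inv_init by simp
next
  case (run_step c w e c')
  have G: "good c e c'" using step_good run_step by blast
  show ?case
  proof (intro conjI allI)
    show "Inv c'" using G by (simp add: good_def)
    fix q r
    have A: "sorted_wrt (<) [v. (q0, r0, v) \<leftarrow> w, q0 = q \<and> r0 = r]"
      "\<forall>v\<in>set [v. (q0, r0, v) \<leftarrow> w, q0 = q \<and> r0 = r]. v \<le> Tv (pst c q) r"
      using run_step by auto
    have B: "sorted_wrt (<) [v. (q0, r0, v) \<leftarrow> e, q0 = q \<and> r0 = r]"
      "\<forall>v\<in>set [v. (q0, r0, v) \<leftarrow> e, q0 = q \<and> r0 = r]. Tv (pst c q) r < v \<and> v \<le> Tv (pst c' q) r"
      "Tv (pst c q) r \<le> Tv (pst c' q) r"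
      using G unfolding good_def by blast+
    have E: "[v. (q0, r0, v) \<leftarrow> w @ e, q0 = q \<and> r0 = r] =
        [v. (q0, r0, v) \<leftarrow> w, q0 = q \<and> r0 = r] @ [v. (q0, r0, v) \<leftarrow> e, q0 = q \<and> r0 = r]" by simp
    show "sorted_wrt (<) [v. (q0, r0, v) \<leftarrow> w @ e, q0 = q \<and> r0 = r]"
      unfolding E sorted_wrt_append using A B by fastforce
    show "\<forall>v\<in>set [v. (q0, r0, v) \<leftarrow> w @ e, q0 = q \<and> r0 = r]. v \<le> Tv (pst c' q) r"
      unfolding E using A B by fastforce
  qed
qed

theorem mainTheorem5:
  fixes c :: "('u,'l,'p::{finite,linorder}) config"
    and w :: "('p \<times> 'p \<times> int) list"
    and p r :: 'p
  assumes "run c w"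
  shows "sorted_wrt (<) [v. (q, r', v) \<leftarrow> w, q = p \<and> r' = r]"
  using run_good[OF assms] by blast

end
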